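(* Let $d\ge1$, $n\ge2$ be integers, $\kappa_d$ the volume of the $d$-dimensional unit ball, $V\ge0$, $c\in(0,\infty)$, $-d/2<\tau_1<\dots<\tau_n$ reals, $a_i=\tau_i+d$, $x_i=\tau_i+d/2$. Let $\Sigma_n^{\mathrm{sb}}$ have entries $\frac{Vd\kappa_d}{2(x_i+x_j)}$, $\Sigma_n^{\mathrm{sp}}$ entries $\frac{Vd^2\kappa_d^2}{a_ia_j}$, and $\Sigma_n=\Sigma_n^{\mathrm{sb}}+c\Sigma_n^{\mathrm{sp}}$ if $c\le1$, $\Sigma_n=\frac1c\Sigma_n^{\mathrm{sb}}+\Sigma_n^{\mathrm{sp}}$ if $c>1$. Define $$D=\Bigg(1+\sum_{j=1}^n\frac{cd\kappa_d}{a_j}\Bigg(\frac{4x_j\prod_{k\in[n]\setminus\{j\}}(x_k+x_j)^2}{a_j\prod_{k\in[n]\setminus\{j\}}(x_k-x_j)^2}-\sum_{i\in[n]\setminus\{j\}}\frac{8x_ix_j(x_i+x_j)\prod_{l\in[n]\setminus\{i,j\},\,k\in\{i,j\}}(x_k+x_l)}{a_i(x_j-x_i)^2\prod_{l\in[n]\setminus\{i,j\},\,k\in\{i,j\}}(x_k-x_l)}\Bigg)\Bigg)\frac{\prod_{1\le i<j\le n}(x_i-x_j)^2}{\prod_{1\le i,j\le n}(x_i+x_j)}.$$ Then $\det(\Sigma_n)=D\big(\frac{Vd\kappa_d}{2}\big)^n$ for $c\in(0,1]$ and $\det(\Sigma_n)=D\big(\frac{Vd\kappa_d}{2c}\big)^n$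 for $c\in(1,\infty)$.
   Context: $\Sigma_n$ is the asymptotic covariance matrix of normalized length power functionals in the critical regime $t\delta_t^d\to c$. $[n]=\{1,\dots,n\}$; products over "$l\in A,\,k\in\{i,j\}$" run over all such pairs $(l,k)$. *)

theory Defs
  imports "HOL-Analysis.Ball_Volume" "Jordan_Normal_Form.Determinant"
begin

(* Indices are shifted: paper index i\<in>[n]={1..n} corresponds to i-1 \<in> {0..<n}. *)

definition kappa :: "nat \<Rightarrow> real" where
  "kappa d = unit_ball_vol (real d)"

definition aa :: "nat \<Rightarrow> (nat \<Rightarrow> real) \<Rightarrow> nat \<Rightarrow> real" where
  "aa d \<tau> i = \<tau> i + real d"

definition xx :: "nat \<Rightarrow> (nat \<Rightarrow> real) \<Rightarrow> nat \<Rightarrow> real" where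
  "xx d \<tau> i = \<tau> i + real d / 2"

definition Sigma_sb :: "nat \<Rightarrow> nat \<Rightarrow> real \<Rightarrow> (nat \<Rightarrow> real) \<Rightarrow> real mat" where
  "Sigma_sb n d V \<tau> = mat n n (\<lambda>(i,j). V * real d * kappa d / (2 * (xx d \<tau> i + xx d \<tau> j)))"

definition Sigma_sp :: "nat \<Rightarrow> nat \<Rightarrow> real \<Rightarrow> (nat \<Rightarrow> real) \<Rightarrow> real mat" where
  "Sigma_sp n d V \<tau> = mat n n (\<lambda>(i,j). V * (real d)^2 * (kappa d)^2 / (aa d \<tau> i * aa d \<tau> j))"

definition Sigma :: "nat \<Rightarrow> nat \<Rightarrow> real \<Rightarrow> real \<Rightarrow> (nat \<Rightarrow> real) \<Rightarrow> real mat" where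
  "Sigma n d V c \<tau> = (if c \<le> 1 then Sigma_sb n d V \<tau> + c \<cdot>\<^sub>m Sigma_sp n d V \<tau>
                     else (1 / c) \<cdot>\<^sub>m Sigma_sb n d V \<tau> + Sigma_sp n d V \<tau>)"

definition DD :: "nat \<Rightarrow> nat \<Rightarrow> real \<Rightarrow> (nat \<Rightarrow> real) \<Rightarrow> real" where
  "DD n d c \<tau> =
    (let x = xx d \<tau>; a = aa d \<tau>; N = {0..<n} in
     (1 + (\<Sum>j\<in>N. c * real d * kappa d / a j *
        (4 * x j * (\<Prod>k\<in>N - {j}. (x k + x j)^2) / (a j * (\<Prod>k\<in>N - {j}. (x k - x j)^2))
         - (\<Sum>i\<in>N - {j}. 8 * x i * x j * (x i + x j) *
              (\<Prod>l\<in>N - {i,j}. \<Prod>k\<in>{i,j}. x k + x l) /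
              (a i * (x j - x i)^2 * (\<Prod>l\<in>N - {i,j}. \<Prod>k\<in>{i,j}. x k - x l))))))
     * (\<Prod>j\<in>N. \<Prod>i\<in>{0..<j}. (x i - x j)^2) / (\<Prod>i\<in>N. \<Prod>j\<in>N. x i + x j))"

end

theory Submission
  imports Defs
begin


definition cmat :: "nat \<Rightarrow> (nat\<Rightarrow>real) \<Rightarrow> (nat\<Rightarrow>real) \<Rightarrow> real mat" where
  "cmat m x y = mat m m (\<lambda>(a,b). 1 / (x a + y b))"
definition GG :: "(nat\<Rightarrow>real) \<Rightarrow> nat \<Rightarrow> real" where
  "GG x m = (\<Prod>b<m. \<Prod>a<b. x a - x b)"
definition HH :: "(nat\<Rightarrow>real) \<Rightarrow> (nat\<Rightarrow>real) \<Rightarrow> nat \<Rightarrow> real" where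
  "HH x y m = (\<Prod>a<m. \<Prod>b<m. x a + y b)"

lemma det_scale:
  fixes N :: "nat \<Rightarrow> nat \<Rightarrow> 'a::comm_ring_1"
  shows "det (mat m m (\<lambda>(i,j). \<alpha> i * \<beta> j * N i j)) =
    (\<Prod>i<m. \<alpha> i) * (\<Prod>j<m. \<beta> j) * det (mat m m (\<lambda>(i,j). N i j))"
proof -
  have "det (mat m m (\<lambda>(i,j). \<alpha> i * \<beta> j * N i j)) =
     (\<Sum>p\<in>{p. p permutes {0..<m}}. (\<Prod>i<m. \<alpha> i) * (\<Prod>j<m. \<beta> j) * (signof p * (\<Prod>i=0..<m. N i (p i))))"
  proof (subst det_def', force, rule sum.cong, simp)
    fix p assume "p \<in> {p. p permutes {0..<m}}"
    hence p: "p permutes {0..<m}" by simp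
    have pl: "\<And>i. i < m \<Longrightarrow> p i < m" using p by (simp add: permutes_in_image)
    have "(\<Prod>i=0..<m. mat m m (\<lambda>(i,j). \<alpha> i * \<beta> j * N i j) $$ (i, p i))
       = (\<Prod>i=0..<m. \<alpha> i * \<beta> (p i) * N i (p i))"
      by (rule prod.cong, simp, simp add: pl)
    also have "\<dots> = (\<Prod>i=0..<m. \<alpha> i) * (\<Prod>i=0..<m. \<beta> (p i)) * (\<Prod>i=0..<m. N i (p i))"
      by (simp add: prod.distrib)
    also have "(\<Prod>i=0..<m. \<beta> (p i)) = (\<Prod>i=0..<m. \<beta> i)"
      using prod.permute[OF p, of \<beta>] by (simp add: comp_def)
    finally show "signof p * (\<Prod>i = 0..<m. mat m m (\<lambda>(i, j). \<alpha> i * \<beta> j * N i j) $$ (i, p i)) =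
         (\<Prod>i<m. \<alpha> i) * (\<Prod>j<m. \<beta> j) * (signof p * (\<Prod>i = 0..<m. N i (p i)))"
      by (simp add: atLeast0LessThan)
  qed
  also have "\<dots> = (\<Prod>i<m. \<alpha> i) * (\<Prod>j<m. \<beta> j) * det (mat m m (\<lambda>(i,j). N i j))"
    apply (subst det_def'[of _ m], force)
    by (simp add: sum_distrib_left)
  finally show ?thesis .
qed

lemma sum_helper:
  fixes g :: "nat \<Rightarrow> 'a::comm_ring_1"
  assumes "i < N" "k < N"
  shows "(\<Sum>l\<in>{0..<N}. (if l = i then 1 else if l = k then c else 0) * g l) = g i + (if k \<noteq> i then c * g k else 0)"
proof -
  have "(\<Sum>l\<in>{0..<N}. (if l = i then 1 else if l = k then c else 0) * g l)
     = (\<Sum>l\<in>{0..<N}. (if l = i then g i else 0) + (if l = k then (if k \<noteq> i then c * g k else 0) else 0))"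
    by (rule sum.cong, auto)
  also have "\<dots> = g i + (if k \<noteq> i then c * g k else 0)"
    using assms by (simp add: sum.distrib)
  finally show ?thesis .
qed

lemma cauchy_entry_alg: fixes A B C S d1 d2 :: real
  assumes "A \<noteq> 0" "B \<noteq> 0" "C \<noteq> 0" "S \<noteq> 0" "B - A = d1" "S - C = d1" "C - A = d2"
  shows "(1/A - 1/B) - S/B*(1/C - 1/S) = d1/C * (d2/B) * (1/A)"
proof -
  have 1: "1/A - 1/B = d1/(A*B)" using assms by (simp add: field_simps)
  have 2: "1/C - 1/S = d1/(C*S)" using assms by (simp add: field_simps)
  have 3: "1/A - 1/C = d2/(A*C)" using assms by (simp add: field_simps)
  have "(1/A - 1/B) - S/B*(1/C - 1/S) = d1/B * (1/A - 1/C)"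
    unfolding 1 2 using assms(1-4) by (simp add: field_simps)
  also have "\<dots> = d1/C * (d2/B) * (1/A)" unfolding 3 using assms(1-4) by (simp add: field_simps)
  finally show ?thesis .
qed
lemma GG_Suc: "GG x (Suc m) = GG x m * (\<Prod>a<m. x a - x m)"
  by (simp add: GG_def)

lemma HH_Suc: "HH x y (Suc m) = HH x y m * (\<Prod>a<m. x a + y m) * (\<Prod>b<m. x m + y b) * (x m + y m)"
  by (simp add: HH_def prod.distrib mult_ac)

lemma cauchy:
  assumes "\<And>a b. a < m \<Longrightarrow> b < m \<Longrightarrow> x a + y b \<noteq> 0"
  shows "det (cmat m x y) = GG x m * GG y m / HH x y m"
  using assms
proof (induction m)
  case 0
  then show ?case by (simp add: cmat_def GG_def HH_def)
next
  case (Suc m)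
  note nz = Suc.prems
  define s where "s = x m + y m"
  have s0: "s \<noteq> 0" using nz[of m m] by (simp add: s_def)
  define M where "M = cmat (Suc m) x y"
  define E :: "real mat" where "E = mat (Suc m) (Suc m) (\<lambda>(i,l). if l = i then 1 else if l = m then -1 else 0)"
  define F :: "real mat" where "F = mat (Suc m) (Suc m) (\<lambda>(l,j). if l = j then 1 else if l = m then -(s/(x m + y j)) else 0)"
  have Mc: "M \<in> carrier_mat (Suc m) (Suc m)" by (simp add: M_def cmat_def)
  have Ec: "E \<in> carrier_mat (Suc m) (Suc m)" by (simp add: E_def)
  have Fc: "F \<in> carrier_mat (Suc m) (Suc m)" by (simp add: F_def)
  have dE: "det E = 1"
    by (subst det_upper_triangular[OF _ Ec]) (auto simp: E_def upper_triangular_def prod_list_diag_prod)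
  have dF: "det F = 1"
    by (subst det_lower_triangular[OF _ Fc]) (auto simp: F_def prod_list_diag_prod)
  define EM where "EM = E * M"
  have EMc: "EM \<in> carrier_mat (Suc m) (Suc m)" using Ec Mc by (simp add: EM_def)
  define P where "P = EM * F"
  have Pc: "P \<in> carrier_mat (Suc m) (Suc m)" using EMc Fc by (simp add: P_def)
  have dP: "det P = det M"
    unfolding P_def EM_def using Ec Mc Fc
    by (simp add: det_mult[of _ "Suc m"] dE dF)
  have EM: "EM $$ (i,j) = M $$ (i,j) + (if m \<noteq> i then - (M $$ (m,j)) else 0)"
    if "i < Suc m" "j < Suc m" for i j
  proof -
    have "EM $$ (i,j) = (\<Sum>l\<in>{0..<Suc m}. (if l = i then 1 else if l = m then -1 else 0) * M $$ (l,j))"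
      using that Ec Mc by (simp add: scalar_prod_def E_def EM_def)
    also have "\<dots> = M $$ (i,j) + (if m \<noteq> i then -1 * M $$ (m,j) else 0)"
      by (rule sum_helper, use that in auto)
    finally show ?thesis by simp
  qed
  have PE: "P $$ (i,j) = EM $$ (i,j) + (if m \<noteq> j then -(s/(x m + y j)) * EM $$ (i,m) else 0)"
    if "i < Suc m" "j < Suc m" for i j
  proof -
    have "P $$ (i,j) = row EM i \<bullet> col F j"
      unfolding P_def using that EMc Fc by (subst index_mult_mat) auto
    also have "\<dots> = (\<Sum>l\<in>{0..<Suc m}. EM $$ (i,l) * F $$ (l,j))"
      using that EMc Fc by (simp add: scalar_prod_def)
    also have "\<dots> = (\<Sum>l\<in>{0..<Suc m}. (if l = j then 1 else if l = m then -(s/(x m + y j)) else 0) * EM $$ (i,l))"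
      by (rule sum.cong, simp, simp add: F_def that mult.commute)
    also have "\<dots> = EM $$ (i,j) + (if m \<noteq> j then -(s/(x m + y j)) * EM $$ (i,m) else 0)"
      by (rule sum_helper, use that in auto)
    finally show ?thesis .
  qed
  have Mij: "M $$ (i,j) = 1 / (x i + y j)" if "i < Suc m" "j < Suc m" for i j
    using that by (simp add: M_def cmat_def)
  have Pm: "P $$ (m,j) = (if j = m then 1/s else 0)" if "j < Suc m" for j
  proof -
    have xj: "x m + y j \<noteq> 0" using nz that by simp
    show ?thesis
    proof (cases "j = m")
      case True
      then show ?thesis using that by (simp add: PE EM Mij s_def)
    next
      case False
      then have "P $$ (m,j) = 1 / (x m + y j) - s / (x m + y j) * (1 / s)"
        using that by (simp add: PE EM Mij s_def)
      also have "\<dots> = 0" using s0 xj by simp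
      finally show ?thesis using False by simp
    qed
  qed
  define \<alpha> where "\<alpha> i = (x m - x i) / (x i + y m)" for i
  define \<beta> where "\<beta> j = (y m - y j) / (x m + y j)" for j
  have Pij: "P $$ (i,j) = \<alpha> i * \<beta> j * (1 / (x i + y j))" if "i < m" "j < m" for i j
  proof -
    have "x m + y j \<noteq> 0" "x i + y m \<noteq> 0" "x i + y j \<noteq> 0" using nz that by simp_all
    have "P $$ (i,j) = (1/(x i + y j) - 1/(x m + y j)) - s/(x m + y j) * (1/(x i + y m) - 1/s)"
      using that by (simp add: PE EM Mij s_def)
    also have "\<dots> = \<alpha> i * \<beta> j * (1 / (x i + y j))"
      unfolding \<alpha>_def \<beta>_def
      by (rule cauchy_entry_alg, use that s0 nz in \<open>auto simp: s_def\<close>)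
    finally show ?thesis .
  qed
  have "det P = (\<Sum>j<Suc m. P $$ (m,j) * cofactor P m j)"
    by (rule laplace_expansion_row[OF Pc], simp)
  also have "\<dots> = 1/s * cofactor P m m"
    by (simp add: Pm)
  also have "cofactor P m m = det (mat_delete P m m)"
    by (simp add: cofactor_def)
  also have "mat_delete P m m = mat m m (\<lambda>(i,j). \<alpha> i * \<beta> j * (1 / (x i + y j)))"
    by (rule eq_matI, use Pc in \<open>auto simp: mat_delete_def Pij\<close>)
  also have "det \<dots> = (\<Prod>i<m. \<alpha> i) * (\<Prod>j<m. \<beta> j) * det (cmat m x y)"
    unfolding cmat_def by (rule det_scale)
  also have "det (cmat m x y) = GG x m * GG y m / HH x y m"
    by (rule Suc.IH, use nz in auto)
  finally have dM: "det M = 1 / s * ((\<Prod>i<m. \<alpha> i) * (\<Prod>j<m. \<beta> j) * (GG x m * GG y m / HH x y m))"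
    using dP by simp
  have H0: "HH x y m \<noteq> 0" using nz by (simp add: HH_def)
  have A0: "(\<Prod>a<m. x a + y m) \<noteq> 0" using nz by simp
  have B0: "(\<Prod>b<m. x m + y b) \<noteq> 0" using nz by simp
  have pa: "(\<Prod>i<m. \<alpha> i) * (\<Prod>j<m. \<beta> j) = 
     (\<Prod>a<m. (x a - x m) * (y a - y m)) / ((\<Prod>a<m. x a + y m) * (\<Prod>b<m. x m + y b))"
  proof -
    have e1: "(\<Prod>i<m. \<alpha> i) = (\<Prod>a<m. x m - x a) / (\<Prod>a<m. x a + y m)"
      by (simp add: \<alpha>_def prod_dividef)
    have e2: "(\<Prod>j<m. \<beta> j) = (\<Prod>a<m. y m - y a) / (\<Prod>b<m. x m + y b)"
      by (simp add: \<beta>_def prod_dividef)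
    have e3: "(\<Prod>a<m. x m - x a) * (\<Prod>a<m. y m - y a) = (\<Prod>a<m. (x a - x m) * (y a - y m))"
      by (simp add: prod.distrib[symmetric] algebra_simps)
    show ?thesis unfolding e1 e2 e3[symmetric] by simp
  qed
  have "det M = GG x m * GG y m * (\<Prod>a<m. (x a - x m) * (y a - y m)) /
       (HH x y m * (\<Prod>a<m. x a + y m) * (\<Prod>b<m. x m + y b) * s)"
    using H0 A0 B0 s0 unfolding dM pa by (simp add: field_simps)
  also have "\<dots> = GG x (Suc m) * GG y (Suc m) / HH x y (Suc m)"
    unfolding GG_Suc HH_Suc s_def by (simp add: prod.distrib mult_ac)
  finally show ?case by (simp add: M_def)
qed



lemma rank_one_update:
  fixes f :: "nat \<times> nat \<Rightarrow> real"
  shows "det (mat n n (\<lambda>(i,j). f (i,j) + u i * v j)) =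
    det (mat n n f) + (\<Sum>i<n. u i * (\<Sum>j<n. v j * cofactor (mat n n f) i j))"
proof -
  define A where "A = mat n n f"
  have Ac: "A \<in> carrier_mat n n" by (simp add: A_def)
  define B where "B k = mat n n (\<lambda>(i,j). f (i,j) + (if i < k then u i * v j else 0))" for k
  have Bc: "B k \<in> carrier_mat n n" for k by (simp add: B_def)
  have main: "k \<le> n \<Longrightarrow> det (B k) = det A + (\<Sum>i<k. u i * (\<Sum>j<n. v j * cofactor A i j))" for k
  proof (induction k)
    case 0
    have "B 0 = A" by (rule eq_matI) (auto simp: A_def B_def)
    then show ?case by simp
  next
    case (Suc k)
    have kn: "k < n" using Suc.prems by simp
    define N0 where "N0 = mat n n (\<lambda>(i,j). if i = k then v j else f (i,j))"
    define N where "N = mat n n (\<lambda>(i,j). if i = k then v j else B k $$ (i,j))"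
    have N0c: "N0 \<in> carrier_mat n n" by (simp add: N0_def)
    have Nc: "N \<in> carrier_mat n n" by (simp add: N_def)
    define Em :: "real mat" where "Em = mat n n (\<lambda>(i,l). if l = i then 1 else if l = k then (if i < k then u i else 0) else 0)"
    have Emc: "Em \<in> carrier_mat n n" by (simp add: Em_def)
    have dEm: "det Em = 1"
      by (subst det_upper_triangular[OF _ Emc]) (auto simp: Em_def upper_triangular_def prod_list_diag_prod)
    have "N = Em * N0"
    proof (rule eq_matI)
      fix i j assume ij: "i < dim_row (Em * N0)" "j < dim_col (Em * N0)"
      hence i: "i < n" and j: "j < n" using Emc N0c by auto
      have "(Em * N0) $$ (i,j) = (\<Sum>l\<in>{0..<n}. (if l = i then 1 else if l = k then (if i < k then u i else 0) else 0) * N0 $$ (l,j))"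
        using i j Emc N0c by (simp add: scalar_prod_def Em_def)
      also have "\<dots> = N0 $$ (i,j) + (if k \<noteq> i then (if i < k then u i else 0) * N0 $$ (k,j) else 0)"
        by (rule sum_helper, use i kn in auto)
      also have "\<dots> = N $$ (i,j)"
        using i j kn by (auto simp: N0_def N_def B_def)
      finally show "N $$ (i,j) = (Em * N0) $$ (i,j)" by simp
    qed (use Emc N0c Nc in auto)
    hence dN: "det N = det N0" using det_mult[OF Emc N0c] dEm by simp
    have "det N0 = (\<Sum>j<n. N0 $$ (k,j) * cofactor N0 k j)"
      by (rule laplace_expansion_row[OF N0c kn])
    also have "\<dots> = (\<Sum>j<n. v j * cofactor A k j)"
    proof (rule sum.cong, simp)
      fix j assume "j \<in> {..<n}"
      hence j: "j < n" by simp
      have "mat_delete N0 k j = mat_delete A k j"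
        by (rule eq_matI, auto simp: mat_delete_def N0_def A_def)
      then show "N0 $$ (k,j) * cofactor N0 k j = v j * cofactor A k j"
        using j kn by (simp add: cofactor_def N0_def)
    qed
    finally have dN0: "det N0 = (\<Sum>j<n. v j * cofactor A k j)" .
    define a where "a = (\<lambda>i::nat. row A k)"
    define b where "b = (\<lambda>i::nat. u k \<cdot>\<^sub>v vec n v)"
    define c where "c = (\<lambda>i. row (B k) i)"
    have "B (Suc k) = mat\<^sub>r n n (\<lambda>i. if i = k then a i + b i else c i)"
      by (rule eq_matI, auto simp: B_def a_def b_def c_def A_def)
    also have "det \<dots> = det (mat\<^sub>r n n (\<lambda>i. if i = k then a i else c i)) +
                        det (mat\<^sub>r n n (\<lambda>i. if i = k then b i else c i))"
      by (rule det_row_add, use kn Ac Bc in \<open>auto simp: a_def b_def c_def\<close>)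
    also have "mat\<^sub>r n n (\<lambda>i. if i = k then a i else c i) = B k"
      by (rule eq_matI, auto simp: B_def a_def c_def A_def)
    also have "mat\<^sub>r n n (\<lambda>i. if i = k then b i else c i) = multrow k (u k) N"
      by (rule eq_matI, auto simp: mat_multrow_def N_def b_def c_def B_def)
    also have "det (multrow k (u k) N) = u k * det N"
      by (rule det_multrow[OF kn Nc])
    finally show ?case
      using Suc.IH Suc.prems dN dN0 by simp
  qed
  have "B n = mat n n (\<lambda>(i,j). f (i,j) + u i * v j)"
    by (rule eq_matI) (auto simp: B_def)
  then show ?thesis using main[of n] by (simp add: A_def)
qed



definition sk :: "nat \<Rightarrow> nat \<Rightarrow> nat" where "sk i a = (if a < i then a else Suc a)"

lemma sk_image: assumes im: "i \<le> m" shows "sk i ` {..<m} = {..<Suc m} - {i}"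
proof (rule equalityI; rule subsetI)
  fix a assume "a \<in> sk i ` {..<m}"
  then show "a \<in> {..<Suc m} - {i}" using im by (auto simp: sk_def)
next
  fix a assume a: "a \<in> {..<Suc m} - {i}"
  show "a \<in> sk i ` {..<m}"
  proof (cases "a < i")
    case True
    then have "a = sk i a" "a < m" using im by (auto simp: sk_def)
    then show ?thesis by blast
  next
    case False
    then have "a = sk i (a - 1)" "a - 1 < m" using im a by (auto simp: sk_def)
    then show ?thesis by blast
  qed
qed

lemma sk_inj: "inj_on (sk i) A"
  by (rule inj_onI) (auto simp: sk_def split: if_splits)

lemma prod_sk: "i \<le> m \<Longrightarrow> (\<Prod>a\<in>{..<Suc m}-{i}. f a) = (\<Prod>a<m. f (sk i a))"
  using prod.reindex[OF sk_inj[of i "{..<m}"], of f] sk_image[of i m] by simp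

lemma prod_sk2: "i \<le> m \<Longrightarrow> (\<Prod>a<Suc m. f a) = f i * (\<Prod>a<m. f (sk i a))"
  by (subst prod.remove[of _ i]) (auto simp: prod_sk)

lemma GG_cong: "(\<And>a. a < m \<Longrightarrow> x a = x' a) \<Longrightarrow> GG x m = GG x' m"
  unfolding GG_def by (rule prod.cong, simp, rule prod.cong, auto)

lemma prod_neg_swap: "(\<Prod>a\<in>A. (x a - z::real)) = (-1) ^ card A * (\<Prod>a\<in>A. z - x a)"
proof -
  have "(\<Prod>a\<in>A. (x a - z)) = (\<Prod>a\<in>A. (-1) * (z - x a))" by simp
  also have "\<dots> = (\<Prod>a\<in>A. (-1::real)) * (\<Prod>a\<in>A. z - x a)" by (rule prod.distrib)
  also have "\<dots> = (-1) ^ card A * (\<Prod>a\<in>A. z - x a)" by simp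
  finally show ?thesis .
qed

lemma GG_del: "i \<le> m \<Longrightarrow> GG x (Suc m) = GG (x \<circ> sk i) m * (-1)^i * (\<Prod>a\<in>{..<Suc m}-{i}. x i - x a)"
proof (induction m arbitrary: i)
  case 0
  then show ?case by (simp add: GG_def)
next
  case (Suc m)
  show ?case
  proof (cases "i = Suc m")
    case True
    have c: "GG (x \<circ> sk i) (Suc m) = GG x (Suc m)"
      by (rule GG_cong) (simp add: sk_def True)
    have s: "{..<Suc (Suc m)} - {i} = {..<Suc m}" using True by auto
    show ?thesis unfolding c s GG_Suc[of x "Suc m"]
      by (simp add: prod_neg_swap[of x] True)
  next
    case False
    then have im: "i \<le> m" using Suc.prems by simp
    have s: "{..<Suc (Suc m)} - {i} = insert (Suc m) ({..<Suc m} - {i})" using im by auto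
    have skm: "sk i m = Suc m" using im by (simp add: sk_def)
    have "GG x (Suc (Suc m)) = GG x (Suc m) * (\<Prod>a<Suc m. x a - x (Suc m))"
      by (rule GG_Suc)
    also have "\<dots> = GG (x \<circ> sk i) m * (-1)^i * (\<Prod>a\<in>{..<Suc m}-{i}. x i - x a) *
        ((x i - x (Suc m)) * (\<Prod>a<m. x (sk i a) - x (Suc m)))"
      by (simp only: Suc.IH[OF im] prod_sk2[OF im])
    also have "\<dots> = GG (x \<circ> sk i) (Suc m) * (-1)^i * (\<Prod>a\<in>{..<Suc (Suc m)}-{i}. x i - x a)"
      unfolding s GG_Suc[of "x \<circ> sk i"] using skm by (simp add: mult_ac)
    finally show ?thesis .
  qed
qed

lemma HH_del:
  assumes "i \<le> m" "j \<le> m"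
  shows "HH x y (Suc m) = HH (x \<circ> sk i) (y \<circ> sk j) m * (\<Prod>b<Suc m. x i + y b) * (\<Prod>a\<in>{..<Suc m}-{i}. x a + y j)"
proof -
  have "HH x y (Suc m) = (\<Prod>b<Suc m. x i + y b) * (\<Prod>a<m. \<Prod>b<Suc m. x (sk i a) + y b)"
    unfolding HH_def by (rule prod_sk2[OF assms(1)])
  also have "(\<Prod>a<m. \<Prod>b<Suc m. x (sk i a) + y b) = (\<Prod>a<m. (x (sk i a) + y j) * (\<Prod>b<m. x (sk i a) + y (sk j b)))"
    by (rule prod.cong, simp, rule prod_sk2[OF assms(2)])
  also have "\<dots> = (\<Prod>a\<in>{..<Suc m}-{i}. x a + y j) * HH (x \<circ> sk i) (y \<circ> sk j) m"
    by (simp add: prod.distrib HH_def prod_sk[OF assms(1)])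
  finally show ?thesis by (simp add: mult_ac)
qed

lemma cofactor_cauchy:
  assumes n: "n = Suc m" and i: "i < n" and j: "j < n"
    and nz: "\<And>a b. a < n \<Longrightarrow> b < n \<Longrightarrow> x a + y b \<noteq> 0"
    and dx: "\<And>a. a < n \<Longrightarrow> a \<noteq> i \<Longrightarrow> x i \<noteq> x a"
    and dy: "\<And>b. b < n \<Longrightarrow> b \<noteq> j \<Longrightarrow> y j \<noteq> y b"
  shows "cofactor (cmat n x y) i j = det (cmat n x y) * ((\<Prod>b<n. x i + y b) * (\<Prod>a\<in>{..<n}-{i}. x a + y j))
      / ((\<Prod>a\<in>{..<n}-{i}. x i - x a) * (\<Prod>b\<in>{..<n}-{j}. y j - y b))"
proof -
  have im: "i \<le> m" and jm: "j \<le> m" using i j n by auto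
  have md: "mat_delete (cmat n x y) i j = cmat m (x \<circ> sk i) (y \<circ> sk j)"
    by (rule eq_matI) (auto simp: mat_delete_def cmat_def sk_def n)
  have nz': "(x \<circ> sk i) a + (y \<circ> sk j) b \<noteq> 0" if "a < m" "b < m" for a b
    using nz that n by (auto simp: sk_def)
  have c1: "det (cmat m (x \<circ> sk i) (y \<circ> sk j)) = GG (x \<circ> sk i) m * GG (y \<circ> sk j) m / HH (x \<circ> sk i) (y \<circ> sk j) m"
    by (rule cauchy, rule nz')
  have c2: "det (cmat n x y) = GG x n * GG y n / HH x y n"
    by (rule cauchy, rule nz)
  define px where "px = (\<Prod>a\<in>{..<n}-{i}. x i - x a)"
  define py where "py = (\<Prod>b\<in>{..<n}-{j}. y j - y b)"
  define R where "R = (\<Prod>b<n. x i + y b)"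
  define S where "S = (\<Prod>a\<in>{..<n}-{i}. x a + y j)"
  have px0: "px \<noteq> 0" unfolding px_def using dx by auto
  have py0: "py \<noteq> 0" unfolding py_def using dy by auto
  have R0: "R \<noteq> 0" unfolding R_def using nz i by auto
  have S0: "S \<noteq> 0" unfolding S_def using nz j by auto
  have H0: "HH (x \<circ> sk i) (y \<circ> sk j) m \<noteq> 0" unfolding HH_def using nz' by auto
  have gx: "GG x n = GG (x \<circ> sk i) m * (-1)^i * px" unfolding n px_def by (rule GG_del[OF im])
  have gy: "GG y n = GG (y \<circ> sk j) m * (-1)^j * py" unfolding n py_def by (rule GG_del[OF jm])
  have hh: "HH x y n = HH (x \<circ> sk i) (y \<circ> sk j) m * R * S" unfolding n R_def S_def by (rule HH_del[OF im jm])
  show ?thesis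
    unfolding cofactor_def md c1 c2 gx gy hh px_def[symmetric] py_def[symmetric] R_def[symmetric] S_def[symmetric]
    using px0 py0 R0 S0 H0 by (simp add: field_simps power_add)
qed



lemma cof_diag:
  fixes x :: "nat \<Rightarrow> real"
  assumes n: "n = Suc m" and j: "j < n"
    and pos: "\<And>a. a < n \<Longrightarrow> x a > 0"
    and dx: "\<And>a b. a < n \<Longrightarrow> b < n \<Longrightarrow> a \<noteq> b \<Longrightarrow> x a \<noteq> x b"
    and aj: "aj \<noteq> 0"
  shows "2 * (1 / aj) * cofactor (cmat n x x) j j =
     det (cmat n x x) * (4 * x j * (\<Prod>k\<in>{0..<n} - {j}. (x k + x j)^2) / (aj * (\<Prod>k\<in>{0..<n} - {j}. (x k - x j)^2)))"
proof -
  have nz: "x a + x b \<noteq> 0" if "a < n" "b < n" for a b using pos[OF that(1)] pos[OF that(2)] by simp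
  have cc: "cofactor (cmat n x x) j j = det (cmat n x x) * ((\<Prod>b<n. x j + x b) * (\<Prod>a\<in>{..<n}-{j}. x a + x j))
      / ((\<Prod>a\<in>{..<n}-{j}. x j - x a) * (\<Prod>b\<in>{..<n}-{j}. x j - x b))"
    by (rule cofactor_cauchy[OF n j j nz]) (use dx j in auto)
  define Pp where "Pp = (\<Prod>k\<in>{0..<n} - {j}. x k + x j)"
  define Pm where "Pm = (\<Prod>k\<in>{0..<n} - {j}. x j - x k)"
  have R: "(\<Prod>b<n. x j + x b) = (2 * x j) * Pp"
    unfolding Pp_def lessThan_atLeast0 using j by (subst prod.remove[of _ j]) (auto simp: add.commute)
  have S: "(\<Prod>a\<in>{..<n}-{j}. x a + x j) = Pp" unfolding Pp_def lessThan_atLeast0 ..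
  have M: "(\<Prod>a\<in>{..<n}-{j}. x j - x a) = Pm" unfolding Pm_def lessThan_atLeast0 ..
  have Pm0: "Pm \<noteq> 0" unfolding Pm_def using dx j by auto
  have sq1: "(\<Prod>k\<in>{0..<n} - {j}. (x k + x j)^2) = Pp^2" unfolding Pp_def prod_power_distrib ..
  have sq2: "(\<Prod>k\<in>{0..<n} - {j}. (x k - x j)^2) = Pm^2" unfolding Pm_def prod_power_distrib
    by (rule prod.cong, simp, simp add: power2_commute)
  show ?thesis unfolding cc R S M sq1 sq2 using Pm0 aj by (simp add: field_simps power2_eq_square)
qed

lemma off_alg: fixes D xi xj Pi Pj Mi Mj ai p :: real
  assumes "Mi \<noteq> 0" "Mj \<noteq> 0" "ai \<noteq> 0" "p \<noteq> 0"
  shows "2 * (1/ai) * (D * (((xi+xi)*((xi+xj)*Pi)) * ((xj+xj)*Pj)) / ((p*Mi)*((-p)*Mj))) = -(D*(8*xi*xj*(xi+xj)*(Pi*Pj)/(ai*(-p)^2*(Mi*Mj))))"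
  using assms by (simp add: field_simps power2_eq_square)

lemma cof_off:
  fixes x :: "nat \<Rightarrow> real"
  assumes n: "n = Suc m" and i: "i < n" and j: "j < n" and ij: "i \<noteq> j"
    and pos: "\<And>a. a < n \<Longrightarrow> x a > 0"
    and dx: "\<And>a b. a < n \<Longrightarrow> b < n \<Longrightarrow> a \<noteq> b \<Longrightarrow> x a \<noteq> x b"
    and ai: "ai \<noteq> 0"
  shows "2 * (1 / ai) * cofactor (cmat n x x) i j =
     - (det (cmat n x x) * (8 * x i * x j * (x i + x j) *
              (\<Prod>l\<in>{0..<n} - {i,j}. \<Prod>k\<in>{i,j}. x k + x l) /
              (ai * (x j - x i)^2 * (\<Prod>l\<in>{0..<n} - {i,j}. \<Prod>k\<in>{i,j}. x k - x l))))"
proof -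
  have nz: "x a + x b \<noteq> 0" if "a < n" "b < n" for a b using pos[OF that(1)] pos[OF that(2)] by simp
  have cc: "cofactor (cmat n x x) i j = det (cmat n x x) * ((\<Prod>b<n. x i + x b) * (\<Prod>a\<in>{..<n}-{i}. x a + x j))
      / ((\<Prod>a\<in>{..<n}-{i}. x i - x a) * (\<Prod>b\<in>{..<n}-{j}. x j - x b))"
    by (rule cofactor_cauchy[OF n i j nz]) (use dx i j in auto)
  define L where "L = {0..<n} - {i,j}"
  have fL: "finite L" by (simp add: L_def)
  define Pi where "Pi = (\<Prod>l\<in>L. x i + x l)"
  define Pj where "Pj = (\<Prod>l\<in>L. x j + x l)"
  define Mi where "Mi = (\<Prod>l\<in>L. x i - x l)"
  define Mj where "Mj = (\<Prod>l\<in>L. x j - x l)"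
  have rem2: "(\<Prod>a\<in>{0..<n}. f a) = f i * (f j * (\<Prod>a\<in>L. f a))" for f :: "nat \<Rightarrow> real"
  proof -
    have "(\<Prod>a\<in>{0..<n}. f a) = f i * (\<Prod>a\<in>{0..<n}-{i}. f a)" using i by (subst prod.remove[of _ i]) auto
    also have "(\<Prod>a\<in>{0..<n}-{i}. f a) = f j * (\<Prod>a\<in>{0..<n}-{i}-{j}. f a)" using j ij by (subst prod.remove[of _ j]) auto
    also have "{0..<n}-{i}-{j} = L" by (auto simp: L_def)
    finally show ?thesis .
  qed
  have rem1: "(\<Prod>a\<in>{0..<n}-{k}. f a) = f k' * (\<Prod>a\<in>L. f a)"
    if "k = i \<and> k' = j \<or> k = j \<and> k' = i" for f :: "nat \<Rightarrow> real" and k k'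
  proof -
    have "(\<Prod>a\<in>{0..<n}-{k}. f a) = f k' * (\<Prod>a\<in>{0..<n}-{k}-{k'}. f a)" using i j ij that by (subst prod.remove[of _ k']) auto
    also have "{0..<n}-{k}-{k'} = L" using that by (auto simp: L_def)
    finally show ?thesis .
  qed
  have R: "(\<Prod>b<n. x i + x b) = (x i + x i) * ((x i + x j) * Pi)"
    unfolding Pi_def lessThan_atLeast0 by (rule rem2)
  have S: "(\<Prod>a\<in>{..<n}-{i}. x a + x j) = (x j + x j) * Pj"
    unfolding Pj_def lessThan_atLeast0 by (subst rem1[of i j]) (auto simp: add.commute)
  have MI: "(\<Prod>a\<in>{..<n}-{i}. x i - x a) = (x i - x j) * Mi"
    unfolding Mi_def lessThan_atLeast0 by (rule rem1) simp
  have MJ: "(\<Prod>b\<in>{..<n}-{j}. x j - x b) = (x j - x i) * Mj"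
    unfolding Mj_def lessThan_atLeast0 by (rule rem1) simp
  have W1: "(\<Prod>l\<in>{0..<n} - {i,j}. \<Prod>k\<in>{i,j}. x k + x l) = Pi * Pj"
    unfolding Pi_def Pj_def L_def[symmetric] using ij by (simp add: prod.distrib)
  have W2: "(\<Prod>l\<in>{0..<n} - {i,j}. \<Prod>k\<in>{i,j}. x k - x l) = Mi * Mj"
    unfolding Mi_def Mj_def L_def[symmetric] using ij by (simp add: prod.distrib)
  have Mi0: "Mi \<noteq> 0" unfolding Mi_def L_def using dx i by auto
  have Mj0: "Mj \<noteq> 0" unfolding Mj_def L_def using dx j by auto
  have d0: "x i - x j \<noteq> 0" using dx i j ij by auto
  have d1: "x j - x i \<noteq> 0" using dx i j ij by auto
  have sq: "x j - x i = - (x i - x j)" by simp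
  show ?thesis unfolding cc R S MI MJ W1 W2 sq
    by (rule off_alg[OF Mi0 Mj0 ai d0])
qed



theorem theorem7p3:
  fixes n d :: nat and V c :: real and \<tau> :: "nat \<Rightarrow> real"
  assumes "d \<ge> 1" and "n \<ge> 2" and "V \<ge> 0" and "c > 0"
    and "\<And>i. i < n \<Longrightarrow> - real d / 2 < \<tau> i"
    and "\<And>i j. i < j \<Longrightarrow> j < n \<Longrightarrow> \<tau> i < \<tau> j"
  shows "(c \<le> 1 \<longrightarrow> det (Sigma n d V c \<tau>) = DD n d c \<tau> * (V * real d * kappa d / 2) ^ n)
       \<and> (c > 1 \<longrightarrow> det (Sigma n d V c \<tau>) = DD n d c \<tau> * (V * real d * kappa d / (2 * c)) ^ n)"
proof -
  define x where "x = xx d \<tau>"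
  define a where "a = aa d \<tau>"
  define \<kappa> where "\<kappa> = kappa d"
  obtain m where n: "n = Suc m" using assms(2) by (cases n) auto
  have pos: "x i > 0" if "i < n" for i
    using assms(5)[OF that] by (simp add: x_def xx_def)
  have apos: "a i > 0" if "i < n" for i
    using assms(5)[OF that] by (simp add: a_def aa_def)
  have dx: "x i \<noteq> x j" if "i < n" "j < n" "i \<noteq> j" for i j
  proof (cases "i < j")
    case True then show ?thesis using assms(6)[OF True that(2)] by (simp add: x_def xx_def)
  next
    case False then have "j < i" using that by simp
    then show ?thesis using assms(6)[OF \<open>j < i\<close> that(1)] by (simp add: x_def xx_def)
  qed
  define C where "C = cmat n x x"
  define dC where "dC = det C"
  define T where "T j = 4 * x j * (\<Prod>k\<in>{0..<n} - {j}. (x k + x j)^2) / (a j * (\<Prod>k\<in>{0..<n} - {j}. (x k - x j)^2))" for j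
  define W where "W i j = 8 * x i * x j * (x i + x j) *
              (\<Prod>l\<in>{0..<n} - {i,j}. \<Prod>k\<in>{i,j}. x k + x l) /
              (a i * (x j - x i)^2 * (\<Prod>l\<in>{0..<n} - {i,j}. \<Prod>k\<in>{i,j}. x k - x l))" for i j
  define Q where "Q = (\<Prod>j\<in>{0..<n}. \<Prod>i\<in>{0..<j}. (x i - x j)^2)"
  define P where "P = (\<Prod>i\<in>{0..<n}. \<Prod>j\<in>{0..<n}. x i + x j)"
  have DDe: "DD n d c \<tau> = (1 + (\<Sum>j\<in>{0..<n}. c * real d * \<kappa> / a j * (T j - (\<Sum>i\<in>{0..<n} - {j}. W i j)))) * Q / P"
    unfolding DD_def Let_def T_def W_def Q_def P_def x_def a_def \<kappa>_def by simp
  have QP: "Q / P = dC"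
  proof -
    have "Q = GG x n * GG x n"
      unfolding Q_def GG_def lessThan_atLeast0 prod_power_distrib[symmetric] power2_eq_square
      by (simp add: prod.distrib)
    moreover have "P = HH x x n" unfolding P_def HH_def lessThan_atLeast0 ..
    moreover have "dC = GG x n * GG x n / HH x x n"
      unfolding dC_def C_def by (rule cauchy, use pos in \<open>fastforce dest: pos\<close>)
    ultimately show ?thesis by simp
  qed
  have inner: "(\<Sum>i<n. (1 / a i) * cofactor C i j) = dC / 2 * (T j - (\<Sum>i\<in>{0..<n} - {j}. W i j))"
    if j: "j < n" for j
  proof -
    have "(\<Sum>i<n. (1 / a i) * cofactor C i j) = (1 / a j) * cofactor C j j + (\<Sum>i\<in>{0..<n} - {j}. (1 / a i) * cofactor C i j)"
      unfolding lessThan_atLeast0 using j by (subst sum.remove[of _ j]) auto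
    also have "(1 / a j) * cofactor C j j = dC / 2 * T j"
    proof -
      have h: "2 * (1 / a j) * cofactor C j j = dC * T j"
        using cof_diag[where x=x and n=n and m=m and j=j and aj="a j", OF n j pos dx] apos[OF j]
        unfolding C_def dC_def T_def by simp
      then show ?thesis by linarith
    qed
    also have "(\<Sum>i\<in>{0..<n} - {j}. (1 / a i) * cofactor C i j) = (\<Sum>i\<in>{0..<n} - {j}. - (dC / 2 * W i j))"
    proof (rule sum.cong, simp)
      fix i assume "i \<in> {0..<n} - {j}"
      hence i: "i < n" and ij: "i \<noteq> j" by auto
      show "(1 / a i) * cofactor C i j = - (dC / 2 * W i j)"
      proof -
        have h: "2 * (1 / a i) * cofactor C i j = - (dC * W i j)"
          using cof_off[where x=x and n=n and m=m and i=i and j=j and ai="a i", OF n i j ij pos dx] apos[OF i]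
          unfolding C_def dC_def W_def by simp
        then show ?thesis by linarith
      qed
    qed
    finally show ?thesis by (simp add: sum_negf sum_distrib_left algebra_simps)
  qed
  have gen: "det (Sigma n d V c \<tau>) = DD n d c \<tau> * K ^ n"
    if S: "Sigma n d V c \<tau> = mat n n (\<lambda>(i,j). K * (1 / (x i + x j)) + (1 / a i) * (\<gamma> * (1 / a j)))"
      and g: "\<gamma> = 2 * (c * real d * \<kappa>) * K" for K \<gamma>
  proof -
    have Cc: "C \<in> carrier_mat n n" by (simp add: C_def cmat_def)
    have mg: "mat n n (\<lambda>(i,j). K * (1 / (x i + x j))) = K \<cdot>\<^sub>m C"
      by (rule eq_matI) (auto simp: C_def cmat_def)
    have cof: "cofactor (K \<cdot>\<^sub>m C) i j = K ^ m * cofactor C i j" for i j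
    proof -
      have "mat_delete (K \<cdot>\<^sub>m C) i j = K \<cdot>\<^sub>m mat_delete C i j"
        by (rule eq_matI) (use Cc in \<open>auto simp: mat_delete_def\<close>)
      then show ?thesis using Cc n by (simp add: cofactor_def)
    qed
    have "det (Sigma n d V c \<tau>) = det (K \<cdot>\<^sub>m C) + (\<Sum>i<n. (1 / a i) * (\<Sum>j<n. (\<gamma> * (1 / a j)) * cofactor (K \<cdot>\<^sub>m C) i j))"
      using rank_one_update[of n "\<lambda>(i,j). K * (1 / (x i + x j))" "\<lambda>i. 1 / a i" "\<lambda>j. \<gamma> * (1 / a j)"]
      unfolding S mg[symmetric] by simp
    also have "\<dots> = K ^ n * dC + \<gamma> * K ^ m * (\<Sum>j<n. (1 / a j) * (\<Sum>i<n. (1 / a i) * cofactor C i j))"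
    proof -
      have d1: "det (K \<cdot>\<^sub>m C) = K ^ n * dC" using Cc by (simp add: dC_def)
      have "(\<Sum>i<n. (1 / a i) * (\<Sum>j<n. (\<gamma> * (1 / a j)) * cofactor (K \<cdot>\<^sub>m C) i j))
          = (\<Sum>i<n. \<Sum>j<n. \<gamma> * K ^ m * ((1 / a j) * ((1 / a i) * cofactor C i j)))"
        unfolding sum_distrib_left by (rule sum.cong, simp, rule sum.cong, simp, simp only: cof mult_ac)
      also have "\<dots> = (\<Sum>j<n. \<Sum>i<n. \<gamma> * K ^ m * ((1 / a j) * ((1 / a i) * cofactor C i j)))"
        by (rule sum.swap)
      also have "\<dots> = \<gamma> * K ^ m * (\<Sum>j<n. (1 / a j) * (\<Sum>i<n. (1 / a i) * cofactor C i j))"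
        by (simp only: sum_distrib_left)
      finally show ?thesis unfolding d1 by simp
    qed
    also have "(\<Sum>j<n. (1 / a j) * (\<Sum>i<n. (1 / a i) * cofactor C i j)) =
        (\<Sum>j<n. (1 / a j) * (dC / 2 * (T j - (\<Sum>i\<in>{0..<n} - {j}. W i j))))"
      by (rule sum.cong, simp, subst inner, auto)
    finally have "det (Sigma n d V c \<tau>) = K ^ n * dC + \<gamma> * K ^ m * (\<Sum>j<n. (1 / a j) * (dC / 2 * (T j - (\<Sum>i\<in>{0..<n} - {j}. W i j))))" .
    also have "\<dots> = (1 + (\<Sum>j\<in>{0..<n}. c * real d * \<kappa> / a j * (T j - (\<Sum>i\<in>{0..<n} - {j}. W i j)))) * dC * K ^ n"
      unfolding g n lessThan_atLeast0
      by (simp add: sum_distrib_left sum_distrib_right algebra_simps)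
    finally show ?thesis unfolding DDe QP[symmetric] by simp
  qed
  show ?thesis
  proof (intro conjI impI)
    assume c1: "c \<le> 1"
    show "det (Sigma n d V c \<tau>) = DD n d c \<tau> * (V * real d * kappa d / 2) ^ n"
    proof (rule gen)
      show "Sigma n d V c \<tau> = mat n n (\<lambda>(i,j). V * real d * kappa d / 2 * (1 / (x i + x j)) + (1 / a i) * (c * V * (real d)^2 * \<kappa>^2 * (1 / a j)))"
      proof (rule eq_matI)
        fix i j assume "i < dim_row (mat n n (\<lambda>(i,j). V * real d * kappa d / 2 * (1 / (x i + x j)) + (1 / a i) * (c * V * (real d)^2 * \<kappa>^2 * (1 / a j))))"
          "j < dim_col (mat n n (\<lambda>(i,j). V * real d * kappa d / 2 * (1 / (x i + x j)) + (1 / a i) * (c * V * (real d)^2 * \<kappa>^2 * (1 / a j))))"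
        hence i: "i < n" and j: "j < n" by auto
        have "x i + x j \<noteq> 0" using pos[OF i] pos[OF j] by simp
        moreover have "a i \<noteq> 0" "a j \<noteq> 0" using apos i j by (simp_all add: less_imp_neq[symmetric])
        ultimately show "Sigma n d V c \<tau> $$ (i, j) = mat n n (\<lambda>(i,j). V * real d * kappa d / 2 * (1 / (x i + x j)) + (1 / a i) * (c * V * (real d)^2 * \<kappa>^2 * (1 / a j))) $$ (i, j)"
          using i j c1 unfolding Sigma_def Sigma_sb_def Sigma_sp_def x_def[symmetric] a_def[symmetric] \<kappa>_def[symmetric]
          by (simp add: field_simps)
      qed (auto simp: Sigma_def Sigma_sb_def Sigma_sp_def c1)
      show "c * V * (real d)^2 * \<kappa>^2 = 2 * (c * real d * \<kappa>) * (V * real d * kappa d / 2)"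
        by (simp add: \<kappa>_def power2_eq_square)
    qed
  next
    assume c1: "c > 1"
    show "det (Sigma n d V c \<tau>) = DD n d c \<tau> * (V * real d * kappa d / (2 * c)) ^ n"
    proof (rule gen)
      show "Sigma n d V c \<tau> = mat n n (\<lambda>(i,j). V * real d * kappa d / (2 * c) * (1 / (x i + x j)) + (1 / a i) * (V * (real d)^2 * \<kappa>^2 * (1 / a j)))"
      proof (rule eq_matI)
        fix i j assume "i < dim_row (mat n n (\<lambda>(i,j). V * real d * kappa d / (2 * c) * (1 / (x i + x j)) + (1 / a i) * (V * (real d)^2 * \<kappa>^2 * (1 / a j))))"
          "j < dim_col (mat n n (\<lambda>(i,j). V * real d * kappa d / (2 * c) * (1 / (x i + x j)) + (1 / a i) * (V * (real d)^2 * \<kappa>^2 * (1 / a j))))"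
        hence i: "i < n" and j: "j < n" by auto
        have "x i + x j \<noteq> 0" using pos[OF i] pos[OF j] by simp
        moreover have "a i \<noteq> 0" "a j \<noteq> 0" using apos i j by (simp_all add: less_imp_neq[symmetric])
        ultimately show "Sigma n d V c \<tau> $$ (i, j) = mat n n (\<lambda>(i,j). V * real d * kappa d / (2 * c) * (1 / (x i + x j)) + (1 / a i) * (V * (real d)^2 * \<kappa>^2 * (1 / a j))) $$ (i, j)"
          using i j c1 unfolding Sigma_def Sigma_sb_def Sigma_sp_def x_def[symmetric] a_def[symmetric] \<kappa>_def[symmetric]
          by (simp add: field_simps)
      qed (auto simp: Sigma_def Sigma_sb_def Sigma_sp_def c1)
      show "V * (real d)^2 * \<kappa>^2 = 2 * (c * real d * \<kappa>) * (V * real d * kappa d / (2 * c))"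
        using c1 by (simp add: \<kappa>_def power2_eq_square)
    qed
  qed
qed

end
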